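(* Let $\kappa$ be a regular cardinal. A $\kappa$-Kurepa tree exists if and only if there exists a $(\kappa,\kappa)$-connected graph of size $\kappa$ which has a $\kappa$-Kurepa minor family of size at least $\kappa^+$.
   Context: A tree is a poset in which the set of predecessors of each element is well-ordered; the $\alpha$-th level is the set of nodes whose set of predecessors has order type $\alpha$, and the height of the tree is the least $\alpha$ with empty $\alpha$-th level. A branch is a maximal chain. A $\kappa$-Kurepa tree is a tree of height $\kappa$ with at least $\kappa^+$ different branches (of length $\kappa$) and all levels of size less than $\kappa$. A graph is a pair $(V,E)$ with $E\subseteq[V]^2$; its size is $|V|$. For infinite cardinals $\kappa,\lambda$, a graph is $(\kappa,\lambda)$-connected if after the removal of any set of fewer than $\kappa$ vertices, the number of connected components of the remaining graph is non-zero and less than $\lambda$. A $K_\kappa$ minor of $G$ is a family of $\kappa$ pairwise disjoint non-empty vertex sets of $G$, each inducing a connected subgraph, such that any two of them are joined by an edge of $G$; we identify it with the union of its sets when speaking about separation. For vertex sets $X,Y,S$, $S$ separates $X$ from $Y$ in $G$ if after removing $S$, $X\setminus S$ and $Y\setminus S$ lie in different components. A family $\{W_\alpha:\alpha<\lambda\}$ of $K_\kappa$ minors of $G$ is a $\kappa$-Kurepa minor family of size $\lambda$ if for all $\alpha\neq\beta$ some set of fewer than $\kappa$ vertices separates $W_\alpha$ from $W_\beta$ in $G$. *)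

theory Defs
  imports Main
begin

unbundle cardinal_syntax

(* Cardinals are represented, as in HOL's BNF cardinal library, by cardinal
   orders r (Card_order r); the ordinal alpha < kappa are represented by the
   initial segments Restr r (underS r a), a : Field r. *)

definition tree_pred :: "'a set \<Rightarrow> 'a rel \<Rightarrow> 'a \<Rightarrow> 'a set" where
  "tree_pred T le t = {s \<in> T. (s, t) \<in> le \<and> s \<noteq> t}"

definition is_tree :: "'a set \<Rightarrow> 'a rel \<Rightarrow> bool" where
  "is_tree T le \<longleftrightarrow> le \<subseteq> T \<times> T \<and> refl_on T le \<and> antisym le \<and> trans le \<and>
     (\<forall>t\<in>T. well_order_on (tree_pred T le t) (Restr le (tree_pred T le t)))"

definition tree_level :: "'a set \<Rightarrow> 'a rel \<Rightarrow> 'b rel \<Rightarrow> 'a set" where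
  "tree_level T le w = {t \<in> T. Restr le (tree_pred T le t) =o w}"

definition tree_height_is :: "'a set \<Rightarrow> 'a rel \<Rightarrow> 'b rel \<Rightarrow> bool" where
  "tree_height_is T le r \<longleftrightarrow>
     (\<forall>a\<in>Field r. tree_level T le (Restr r (underS r a)) \<noteq> {}) \<and> tree_level T le r = {}"

definition is_chain :: "'a set \<Rightarrow> 'a rel \<Rightarrow> 'a set \<Rightarrow> bool" where
  "is_chain T le C \<longleftrightarrow> C \<subseteq> T \<and> (\<forall>x\<in>C. \<forall>y\<in>C. (x, y) \<in> le \<or> (y, x) \<in> le)"

definition is_branch :: "'a set \<Rightarrow> 'a rel \<Rightarrow> 'a set \<Rightarrow> bool" where
  "is_branch T le B \<longleftrightarrow> is_chain T le B \<and> (\<forall>C. is_chain T le C \<and> B \<subseteq> C \<longrightarrow> C = B)"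

definition kurepa_tree :: "'b rel \<Rightarrow> 'a set \<Rightarrow> 'a rel \<Rightarrow> bool" where
  "kurepa_tree r T le \<longleftrightarrow> is_tree T le \<and> tree_height_is T le r \<and>
     (\<forall>a\<in>Field r. |tree_level T le (Restr r (underS r a))| <o r) \<and>
     cardSuc r \<le>o |{B. is_branch T le B \<and> Restr le B =o r}|"

definition is_graph :: "'a set \<Rightarrow> 'a set set \<Rightarrow> bool" where
  "is_graph V E \<longleftrightarrow> (\<forall>e\<in>E. e \<subseteq> V \<and> card e = 2)"

definition adj :: "'a set set \<Rightarrow> 'a rel" where
  "adj E = {(x, y). {x, y} \<in> E}"

definition conn_in :: "'a set set \<Rightarrow> 'a set \<Rightarrow> 'a rel" where
  "conn_in E U = Restr ((Restr (adj E) U)\<^sup>*) U"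

definition components :: "'a set set \<Rightarrow> 'a set \<Rightarrow> 'a set set" where
  "components E U = U // conn_in E U"

definition induces_connected :: "'a set set \<Rightarrow> 'a set \<Rightarrow> bool" where
  "induces_connected E X \<longleftrightarrow> X \<noteq> {} \<and> (\<forall>x\<in>X. \<forall>y\<in>X. (x, y) \<in> conn_in E X)"

definition kl_connected :: "'b rel \<Rightarrow> 'c rel \<Rightarrow> 'a set \<Rightarrow> 'a set set \<Rightarrow> bool" where
  "kl_connected k l V E \<longleftrightarrow>
     (\<forall>S. S \<subseteq> V \<and> |S| <o k \<longrightarrow>
        components E (V - S) \<noteq> {} \<and> |components E (V - S)| <o l)"

(* a K_kappa minor, given as the family of its branch sets *)
definition K_minor :: "'b rel \<Rightarrow> 'a set \<Rightarrow> 'a set set \<Rightarrow> 'a set set \<Rightarrow> bool" where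
  "K_minor k V E M \<longleftrightarrow> |M| =o k \<and>
     (\<forall>A\<in>M. A \<subseteq> V \<and> induces_connected E A) \<and>
     (\<forall>A\<in>M. \<forall>B\<in>M. A \<noteq> B \<longrightarrow> A \<inter> B = {} \<and> (\<exists>x\<in>A. \<exists>y\<in>B. {x, y} \<in> E))"

definition separates :: "'a set \<Rightarrow> 'a set set \<Rightarrow> 'a set \<Rightarrow> 'a set \<Rightarrow> 'a set \<Rightarrow> bool" where
  "separates V E S X Y \<longleftrightarrow>
     (\<forall>x\<in>X - S. \<forall>y\<in>Y - S. (x, y) \<notin> conn_in E (V - S))"

definition kurepa_minor_family :: "'b rel \<Rightarrow> 'a set \<Rightarrow> 'a set set \<Rightarrow> 'a set set set \<Rightarrow> bool" where
  "kurepa_minor_family k V E F \<longleftrightarrow> (\<forall>M\<in>F. K_minor k V E M) \<and>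
     (\<forall>M\<in>F. \<forall>N\<in>F. M \<noteq> N \<longrightarrow>
        (\<exists>S. S \<subseteq> V \<and> |S| <o k \<and> separates V E S (\<Union>M) (\<Union>N)))"

end

theory Submission
  imports Defs
begin


lemma wo_Field_Restr:
  assumes "Well_order r" "A \<subseteq> Field r" shows "Field (Restr r A) = A"
  using assms Refl_Field_Restr2 unfolding well_order_on_def linear_order_on_def partial_order_on_def preorder_on_def by blast

lemma underS_sub_Field: "underS r a \<subseteq> Field r"
  by (auto simp: underS_def Field_def)

lemma wo_R_less:
  assumes W: "Well_order r" and c: "c \<in> underS r c'"
  shows "Restr r (underS r c) <o Restr r (underS r c')"
proof -
  let ?w = "Restr r (underS r c')"
  have Ww: "Well_order ?w" using W Well_order_Restr by blast
  have Fw: "Field ?w = underS r c'" using wo_Field_Restr[OF W underS_sub_Field] .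
  have trr: "trans r" and ant: "antisym r" using W unfolding well_order_on_def linear_order_on_def partial_order_on_def preorder_on_def by auto
  have sub: "underS r c \<subseteq> underS r c'" using c trr ant unfolding underS_def trans_def antisym_def by blast
  have u: "underS ?w c = underS r c" using c sub unfolding underS_def by auto
  have "Restr ?w (underS ?w c) <o ?w" using underS_Restr_ordLess[OF Ww] Fw c by auto
  moreover have "Restr ?w (underS ?w c) = Restr r (underS r c)" using u sub by auto
  ultimately show ?thesis by simp
qed

lemma wo_R_inj:
  assumes W: "Well_order r" and c: "c \<in> Field r" "c' \<in> Field r"
    and iso: "Restr r (underS r c) =o Restr r (underS r c')"
  shows "c = c'"
proof (rule ccontr)
  assume ne: "c \<noteq> c'"
  have "(c, c') \<in> r \<or> (c', c) \<in> r" using W c ne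
    unfolding well_order_on_def linear_order_on_def total_on_def by blast
  then show False
  proof
    assume "(c, c') \<in> r"
    then have "c \<in> underS r c'" using ne unfolding underS_def by auto
    then show False using wo_R_less[OF W] iso not_ordLess_ordIso by blast
  next
    assume "(c', c) \<in> r"
    then have "c' \<in> underS r c" using ne unfolding underS_def by auto
    then show False using wo_R_less[OF W] iso not_ordLess_ordIso ordIso_symmetric by blast
  qed
qed



lemma ordIso_WO: "r =o r' \<Longrightarrow> Well_order r \<and> Well_order r'"
  unfolding ordIso_def by auto

lemma ordLess_WO: "r <o r' \<Longrightarrow> Well_order r \<and> Well_order r'"
  unfolding ordLess_def by auto

lemma tree_basic:
  assumes "is_tree T le"
  shows "le \<subseteq> T \<times> T" "refl_on T le" "antisym le" "trans le"
  using assms unfolding is_tree_def by auto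

lemma tree_P_WO:
  assumes "is_tree T le" "t \<in> T"
  shows "Well_order (Restr le (tree_pred T le t))"
    "Field (Restr le (tree_pred T le t)) = tree_pred T le t"
  using assms well_order_on_Well_order unfolding is_tree_def by blast+

lemma tree_cmp:
  assumes tr: "is_tree T le" and a: "(a, v) \<in> le" and b: "(b, v) \<in> le"
  shows "(a, b) \<in> le \<or> (b, a) \<in> le"
proof -
  have sub: "le \<subseteq> T \<times> T" and rf: "refl_on T le" using tree_basic[OF tr] by auto
  have vT: "v \<in> T" "a \<in> T" "b \<in> T" using a b sub by auto
  show ?thesis
  proof (cases "a = v \<or> b = v \<or> a = b")
    case True then show ?thesis using a b rf vT unfolding refl_on_def by auto
  next
    case False
    then have "a \<in> tree_pred T le v" "b \<in> tree_pred T le v" using a b vT unfolding tree_pred_def by auto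
    moreover have "Well_order (Restr le (tree_pred T le v))"
      "Field (Restr le (tree_pred T le v)) = tree_pred T le v" using tree_P_WO[OF tr vT(1)] by auto
    ultimately have "total_on (tree_pred T le v) (Restr le (tree_pred T le v))"
      unfolding well_order_on_def linear_order_on_def by metis
    then have "(a, b) \<in> Restr le (tree_pred T le v) \<or> (b, a) \<in> Restr le (tree_pred T le v)"
      using False \<open>a \<in> tree_pred T le v\<close> \<open>b \<in> tree_pred T le v\<close> unfolding total_on_def by blast
    then show ?thesis by blast
  qed
qed

lemma tree_pred_pred:
  assumes tr: "is_tree T le" and s: "s \<in> tree_pred T le t"
  shows "tree_pred T le s \<subseteq> tree_pred T le t"
    "underS (Restr le (tree_pred T le t)) s = tree_pred T le s"
    "Restr (Restr le (tree_pred T le t)) (tree_pred T le s) = Restr le (tree_pred T le s)"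
proof -
  have sub: "le \<subseteq> T \<times> T" and an: "antisym le" and trr: "trans le" using tree_basic[OF tr] by auto
  show 1: "tree_pred T le s \<subseteq> tree_pred T le t"
    using s an trr unfolding tree_pred_def antisym_def trans_def by blast
  show "underS (Restr le (tree_pred T le t)) s = tree_pred T le s"
    using s 1 sub unfolding underS_def tree_pred_def by blast
  show "Restr (Restr le (tree_pred T le t)) (tree_pred T le s) = Restr le (tree_pred T le s)"
    using 1 by blast
qed

lemma tree_P_less:
  assumes tr: "is_tree T le" and W: "Well_order r" and h: "tree_level T le r = {}" and t: "t \<in> T"
  shows "Restr le (tree_pred T le t) <o r"
proof (rule ccontr)
  let ?P = "Restr le (tree_pred T le t)"
  assume "\<not> ?P <o r"
  then have "r \<le>o ?P" using ordLess_or_ordLeq[OF tree_P_WO(1)[OF tr t] W] by blast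
  then have "r <o ?P \<or> r =o ?P" using ordLeq_iff_ordLess_or_ordIso by blast
  then show False
  proof
    assume "r =o ?P"
    then have "?P =o r" by (rule ordIso_symmetric)
    then have "t \<in> tree_level T le r" using t unfolding tree_level_def by blast
    then show False using h by auto
  next
    assume "r <o ?P"
    then obtain s where s: "s \<in> Field ?P" and iso: "r =o Restr ?P (underS ?P s)"
      using ordLess_iff_ordIso_Restr[OF tree_P_WO(1)[OF tr t] W] by blast
    have sp: "s \<in> tree_pred T le t" using s tree_P_WO(2)[OF tr t] by simp
    then have sT: "s \<in> T" unfolding tree_pred_def by auto
    have "Restr ?P (underS ?P s) = Restr le (tree_pred T le s)"
      using tree_pred_pred[OF tr sp] by simp
    then have "Restr le (tree_pred T le s) =o r" using iso ordIso_symmetric by metis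
    then have "s \<in> tree_level T le r" using sT unfolding tree_level_def by blast
    then show False using h by auto
  qed
qed

lemma tree_has_level:
  assumes tr: "is_tree T le" and W: "Well_order r" and h: "tree_level T le r = {}" and t: "t \<in> T"
  shows "\<exists>c\<in>Field r. t \<in> tree_level T le (Restr r (underS r c))"
proof -
  obtain c where "c \<in> Field r" "Restr le (tree_pred T le t) =o Restr r (underS r c)"
    using tree_P_less[OF assms] ordLess_iff_ordIso_Restr[OF W tree_P_WO(1)[OF tr t]] by blast
  then show ?thesis using t unfolding tree_level_def by blast
qed

lemma tree_level_unique:
  assumes W: "Well_order r" and c: "c \<in> Field r" "c' \<in> Field r"
    and t: "t \<in> tree_level T le (Restr r (underS r c))" "t \<in> tree_level T le (Restr r (underS r c'))"
  shows "c = c'"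
proof -
  have a: "Restr le (tree_pred T le t) =o Restr r (underS r c)"
    and b: "Restr le (tree_pred T le t) =o Restr r (underS r c')"
    using t unfolding tree_level_def by auto
  have "Restr r (underS r c) =o Restr r (underS r c')"
    using ordIso_transitive[OF ordIso_symmetric[OF a] b] .
  then show ?thesis using wo_R_inj[OF W c] by blast
qed

lemma branch_chain: "is_branch T le B \<Longrightarrow> is_chain T le B"
  unfolding is_branch_def by auto

lemma branch_down:
  assumes tr: "is_tree T le" and B: "is_branch T le B" and x: "x \<in> B" and p: "(p, x) \<in> le"
  shows "p \<in> B"
proof -
  have sub: "le \<subseteq> T \<times> T" and trr: "trans le" using tree_basic[OF tr] by auto
  have ch: "is_chain T le B" using B unfolding is_branch_def by auto
  have "is_chain T le (insert p B)"
    unfolding is_chain_def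
  proof (intro conjI ballI)
    show "insert p B \<subseteq> T" using ch p sub unfolding is_chain_def by auto
  next
    fix a b assume a: "a \<in> insert p B" and b: "b \<in> insert p B"
    have cmp: "(p, y) \<in> le \<or> (y, p) \<in> le" if y: "y \<in> B" for y
    proof -
      have "(x, y) \<in> le \<or> (y, x) \<in> le" using ch x y unfolding is_chain_def by auto
      then show ?thesis
      proof
        assume "(x, y) \<in> le" then show ?thesis using p trr unfolding trans_def by blast
      next
        assume "(y, x) \<in> le" then show ?thesis using tree_cmp[OF tr p] by blast
      qed
    qed
    have pp: "(p, p) \<in> le" using p sub tree_basic(2)[OF tr] unfolding refl_on_def by auto
    show "(a, b) \<in> le \<or> (b, a) \<in> le"
      using a b cmp ch pp unfolding is_chain_def by auto
  qed
  then have "insert p B = B" using B unfolding is_branch_def by blast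
  then show ?thesis by auto
qed

lemma branch_Field:
  assumes tr: "is_tree T le" and B: "is_branch T le B"
  shows "Field (Restr le B) = B"
proof -
  have "B \<subseteq> T" using B unfolding is_branch_def is_chain_def by auto
  then show ?thesis using tree_basic(2)[OF tr] unfolding refl_on_def Field_def by blast
qed

lemma branch_level:
  assumes tr: "is_tree T le" and B: "is_branch T le B" and iso: "Restr le B =o r"
    and b: "\<beta> \<in> Field r"
  shows "\<exists>w\<in>B. w \<in> tree_level T le (Restr r (underS r \<beta>))"
proof -
  let ?WB = "Restr le B"
  have W: "Well_order r" and WB: "Well_order ?WB" using ordIso_WO[OF iso] by auto
  have BT: "B \<subseteq> T" using B unfolding is_branch_def is_chain_def by auto
  have "Restr r (underS r \<beta>) <o r" using underS_Restr_ordLess[OF W] b by auto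
  then have "Restr r (underS r \<beta>) <o ?WB" using iso ordIso_symmetric ordLess_ordIso_trans by blast
  then obtain w where w: "w \<in> Field ?WB" and wi: "Restr r (underS r \<beta>) =o Restr ?WB (underS ?WB w)"
    using ordLess_iff_ordIso_Restr[OF WB ordLess_WO[OF \<open>Restr r (underS r \<beta>) <o r\<close>, THEN conjunct1]] by blast
  have wB: "w \<in> B" using w branch_Field[OF tr B] by auto
  have pB: "tree_pred T le w \<subseteq> B" using branch_down[OF tr B wB] unfolding tree_pred_def by auto
  have "underS ?WB w = tree_pred T le w"
    using pB BT wB unfolding underS_def tree_pred_def by auto
  then have "Restr ?WB (underS ?WB w) = Restr le (tree_pred T le w)" using pB by auto
  then have "Restr le (tree_pred T le w) =o Restr r (underS r \<beta>)"
    using wi ordIso_symmetric by metis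
  then have "w \<in> tree_level T le (Restr r (underS r \<beta>))"
    using wB BT unfolding tree_level_def by blast
  then show ?thesis using wB by blast
qed

lemma branch_card:
  assumes tr: "is_tree T le" and B: "is_branch T le B" and iso: "Restr le B =o r" and C: "Card_order r"
  shows "|B| =o r"
proof -
  have "|Field (Restr le B)| =o |Field r|" using card_of_cong[OF iso] .
  then have "|B| =o |Field r|" using branch_Field[OF tr B] by simp
  then show ?thesis using card_of_Field_ordIso[OF C] ordIso_transitive by blast
qed



lemma adj_sym: "sym (adj E)"
  unfolding adj_def sym_def by (auto simp: insert_commute)

lemma conn_equiv: "equiv U (conn_in E U)"
proof (rule equivI)
  show "refl_on U (conn_in E U)" unfolding conn_in_def refl_on_def by auto
  have "sym (Restr (adj E) U)" using adj_sym[of E] unfolding sym_def by blast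
  then have "sym ((Restr (adj E) U)\<^sup>*)" by (rule sym_rtrancl)
  then show "sym (conn_in E U)" unfolding conn_in_def sym_def by auto
  show "trans (conn_in E U)" unfolding conn_in_def by (rule trans_Restr) (rule trans_rtrancl)
  show "conn_in E U \<subseteq> U \<times> U" unfolding conn_in_def by auto
qed

lemma conn_mono:
  assumes "U \<subseteq> U'" shows "conn_in E U \<subseteq> conn_in E U'"
proof -
  have "Restr (adj E) U \<subseteq> Restr (adj E) U'" using assms by auto
  then have "(Restr (adj E) U)\<^sup>* \<subseteq> (Restr (adj E) U')\<^sup>*" by (rule rtrancl_mono)
  then show ?thesis using assms unfolding conn_in_def by auto
qed

lemma conn_edge:
  assumes "x \<in> U" "y \<in> U" "{x, y} \<in> E" shows "(x, y) \<in> conn_in E U"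
proof -
  have "(x, y) \<in> Restr (adj E) U" using assms unfolding adj_def by auto
  then show ?thesis using assms unfolding conn_in_def by auto
qed

lemma conn_refl: "x \<in> U \<Longrightarrow> (x, x) \<in> conn_in E U"
  unfolding conn_in_def by auto

lemma conn_closed:
  assumes cl: "\<And>v w. v \<in> D \<Longrightarrow> (v, w) \<in> adj E \<Longrightarrow> v \<in> U \<Longrightarrow> w \<in> U \<Longrightarrow> w \<in> D"
    and xy: "(x, y) \<in> conn_in E U" and x: "x \<in> D"
  shows "y \<in> D"
proof -
  have "(x, y) \<in> (Restr (adj E) U)\<^sup>*" using xy unfolding conn_in_def by auto
  then show ?thesis
  proof (induction rule: rtrancl_induct)
    case base then show ?case using x .
  next
    case (step y z) then show ?case using cl by auto
  qed
qed

lemma components_le: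
  assumes Q: "Q \<subseteq> U" and cov: "\<forall>v\<in>U. \<exists>q\<in>Q. (v, q) \<in> conn_in E U"
  shows "|components E U| \<le>o |Q|"
proof -
  have "components E U \<subseteq> (\<lambda>q. conn_in E U `` {q}) ` Q"
  proof
    fix X assume "X \<in> components E U"
    then obtain v where v: "v \<in> U" and X: "X = conn_in E U `` {v}"
      unfolding components_def quotient_def by auto
    obtain q where q: "q \<in> Q" "(v, q) \<in> conn_in E U" using cov v by auto
    have "conn_in E U `` {v} = conn_in E U `` {q}"
      using equiv_class_eq[OF conn_equiv q(2)] .
    then show "X \<in> (\<lambda>q. conn_in E U `` {q}) ` Q" using X q by auto
  qed
  then have "|components E U| \<le>o |(\<lambda>q. conn_in E U `` {q}) ` Q|" by (rule card_of_mono1)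
  then show ?thesis using card_of_image ordLeq_transitive by blast
qed

lemma components_ne: "U \<noteq> {} \<Longrightarrow> components E U \<noteq> {}"
  unfolding components_def quotient_def by auto

lemma components_disj:
  assumes "X \<in> components E U" "Y \<in> components E U" "X \<inter> Y \<noteq> {}" shows "X = Y"
  using assms quotient_disj[OF conn_equiv] unfolding components_def by blast

lemma components_nonempty: "X \<in> components E U \<Longrightarrow> X \<noteq> {}"
  using in_quotient_imp_non_empty[OF conn_equiv] unfolding components_def by blast

lemma components_class: "v \<in> U \<Longrightarrow> conn_in E U `` {v} \<in> components E U"
  unfolding components_def by (rule quotientI)



lemma R_card_less:
  assumes C: "Card_order r" and c: "c \<in> Field r"
  shows "|Field (Restr r (underS r c))| <o r"
proof -
  have W: "Well_order r" using card_order_on_well_order_on C by blast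
  have "Field (Restr r (underS r c)) = underS r c" using wo_Field_Restr[OF W underS_sub_Field] .
  then show ?thesis using card_of_underS[OF C c] by simp
qed

lemma less_r_imp_le_Field:
  assumes C: "Card_order r" and "|A| <o r" shows "|A| \<le>o |Field r|"
  using ordLess_imp_ordLeq[OF ordLess_ordIso_trans[OF assms(2) ordIso_symmetric[OF card_of_Field_ordIso[OF C]]]] .

lemma forward:
  fixes r :: "'b rel" and T :: "'a set"
  assumes C: "Card_order r" and inf: "infinite (Field r)" and K: "kurepa_tree r T le"
  shows "\<exists>(V :: 'a set) (E :: 'a set set) (F :: 'a set set set).
             is_graph V E \<and> (card_of V, r) \<in> ordIso \<and> kl_connected r r V E \<and>
             kurepa_minor_family r V E F \<and> (cardSuc r, card_of F) \<in> ordLeq"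
proof -
  have W: "Well_order r" using card_order_on_well_order_on C by blast
  have tr: "is_tree T le" and hz: "tree_level T le r = {}"
    and lev: "\<forall>a\<in>Field r. |tree_level T le (Restr r (underS r a))| <o r"
    and br: "cardSuc r \<le>o |{B. is_branch T le B \<and> Restr le B =o r}|"
    using K unfolding kurepa_tree_def tree_height_is_def by auto
  have sub: "le \<subseteq> T \<times> T" and rf: "refl_on T le" and trr: "trans le"
    using tree_basic[OF tr] by auto
  define Bs where "Bs = {B. is_branch T le B \<and> Restr le B =o r}"
  define V where "V = \<Union>Bs"
  define E where "E = {{x, y} | x y. x \<in> V \<and> y \<in> V \<and> x \<noteq> y \<and> (x, y) \<in> le}"
  define ms where "ms = (\<lambda>B::'a set. (\<lambda>x. {x}) ` B)"
  define F where "F = ms ` Bs"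
  have BsT: "B \<subseteq> T" if "B \<in> Bs" for B using that unfolding Bs_def is_branch_def is_chain_def by auto
  have VT: "V \<subseteq> T" using BsT unfolding V_def by auto
  have Eiff: "{x, y} \<in> E" if "x \<in> V" "y \<in> V" "x \<noteq> y" "(x, y) \<in> le \<or> (y, x) \<in> le" for x y
    using that unfolding E_def by (auto simp: insert_commute)
  have adjE: "x \<in> V \<and> y \<in> V \<and> x \<noteq> y \<and> ((x, y) \<in> le \<or> (y, x) \<in> le)" if "(x, y) \<in> adj E" for x y
    using that unfolding adj_def E_def by (auto simp: doubleton_eq_iff)
  have Bs_ne: "Bs \<noteq> {}"
  proof
    assume "Bs = {}"
    then have "cardSuc r \<le>o |{}::'a set set|" using br unfolding Bs_def by metis
    moreover have "|{}::'a set set| \<le>o r" using ordLeq_ordIso_trans[OF card_of_empty card_of_Field_ordIso[OF C]] .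
    ultimately have "cardSuc r \<le>o r" by (rule ordLeq_transitive)
    then show False using cardSuc_greater[OF C] not_ordLess_ordLeq by blast
  qed
  then obtain B0 where B0: "B0 \<in> Bs" by auto
  have B0c: "|B0| =o r" using B0 branch_card[OF tr _ _ C] unfolding Bs_def by blast
  have Tle: "|T| \<le>o |Field r|"
  proof -
    have "T \<subseteq> (\<Union>c\<in>Field r. tree_level T le (Restr r (underS r c)))"
      using tree_has_level[OF tr W hz] by blast
    moreover have "|\<Union>c\<in>Field r. tree_level T le (Restr r (underS r c))| \<le>o |Field r|"
      by (rule card_of_UNION_ordLeq_infinite[OF inf card_of_refl[THEN ordIso_imp_ordLeq]])
        (use lev less_r_imp_le_Field[OF C] in blast)
    ultimately show ?thesis using ordLeq_transitive[OF card_of_mono1] by blast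
  qed
  have Viso: "|V| =o r"
  proof -
    have "|V| \<le>o r" using ordLeq_ordIso_trans[OF ordLeq_transitive[OF card_of_mono1[OF VT] Tle] card_of_Field_ordIso[OF C]] .
    moreover have "|B0| \<le>o |V|" using B0 unfolding V_def by (intro card_of_mono1) auto
    then have "r \<le>o |V|" using ordIso_ordLeq_trans[OF ordIso_symmetric[OF B0c]] by blast
    ultimately show ?thesis using ordIso_iff_ordLeq by auto
  qed
  have graph: "is_graph V E"
    unfolding is_graph_def E_def by auto
  have kl: "kl_connected r r V E"
    unfolding kl_connected_def
  proof (intro allI impI conjI)
    fix S assume "S \<subseteq> V \<and> |S| <o r"
    then have SV: "S \<subseteq> V" and Sc: "|S| <o r" by auto
    show "components E (V - S) \<noteq> {}"
    proof (rule components_ne)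
      show "V - S \<noteq> {}"
      proof
        assume "V - S = {}"
        then have "|V| \<le>o |S|" by (intro card_of_mono1) auto
        then have "|V| <o r" using ordLeq_ordLess_trans[OF _ Sc] by blast
        then show False using Viso not_ordLess_ordIso by auto
      qed
    qed
    define phi where "phi = (\<lambda>s. SOME c. c \<in> Field r \<and> s \<in> tree_level T le (Restr r (underS r c)))"
    define Ks where "Ks = {c\<in>Field r. \<exists>s\<in>S. s \<in> tree_level T le (Restr r (underS r c))}"
    have phi: "phi s \<in> Field r \<and> s \<in> tree_level T le (Restr r (underS r (phi s)))" if "s \<in> S" for s
    proof -
      have "\<exists>c. c \<in> Field r \<and> s \<in> tree_level T le (Restr r (underS r c))"
        using tree_has_level[OF tr W hz, of s] that SV VT by blast
      then show ?thesis unfolding phi_def by (rule someI_ex)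
    qed
    have "Ks \<subseteq> phi ` S"
    proof
      fix c assume "c \<in> Ks"
      then obtain s where s: "s \<in> S" "c \<in> Field r" "s \<in> tree_level T le (Restr r (underS r c))"
        unfolding Ks_def by auto
      have "c = phi s" using tree_level_unique[OF W s(2) phi[OF s(1), THEN conjunct1] s(3) phi[OF s(1), THEN conjunct2]] .
      then show "c \<in> phi ` S" using s by auto
    qed
    then have "|Ks| \<le>o |S|" using ordLeq_transitive[OF card_of_mono1 card_of_image] by blast
    then have Ksc: "|Ks| <o r" using ordLeq_ordLess_trans[OF _ Sc] by blast
    have "Ks \<noteq> Field r"
    proof
      assume "Ks = Field r"
      then have "|Field r| <o r" using Ksc by simp
      then show False using card_of_Field_ordIso[OF C] not_ordLess_ordIso by auto
    qed
    then obtain \<beta> where b: "\<beta> \<in> Field r" "\<beta> \<notin> Ks" unfolding Ks_def by auto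
    define Q where "Q = V \<inter> tree_level T le (Restr r (underS r \<beta>))"
    have QS: "Q \<subseteq> V - S"
    proof
      fix q assume "q \<in> Q"
      then have "q \<in> V" "q \<in> tree_level T le (Restr r (underS r \<beta>))" unfolding Q_def by auto
      moreover have "q \<notin> S" using b calculation(2) unfolding Ks_def by blast
      ultimately show "q \<in> V - S" by blast
    qed
    have cov: "\<forall>v\<in>V - S. \<exists>q\<in>Q. (v, q) \<in> conn_in E (V - S)"
    proof
      fix v assume v: "v \<in> V - S"
      then obtain B where B: "B \<in> Bs" "v \<in> B" unfolding V_def by auto
      have Bb: "is_branch T le B" "Restr le B =o r" using B unfolding Bs_def by auto
      obtain w where w: "w \<in> B" "w \<in> tree_level T le (Restr r (underS r \<beta>))"
        using branch_level[OF tr Bb b(1)] by blast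
      have wV: "w \<in> V" using w B unfolding V_def by auto
      then have wQ: "w \<in> Q" using w unfolding Q_def by auto
      have "(v, w) \<in> conn_in E (V - S)"
      proof (cases "v = w")
        case True then show ?thesis using conn_refl[of v "V - S" E] v by simp
      next
        case False
        have "is_chain T le B" using branch_chain[OF Bb(1)] .
        then have "(v, w) \<in> le \<or> (w, v) \<in> le" using B(2) w(1) unfolding is_chain_def by blast
        then have "{v, w} \<in> E" using Eiff[OF _ wV False] v by blast
        moreover have "w \<in> V - S" using wQ QS by blast
        ultimately show ?thesis using conn_edge[of v "V - S" w E] v by blast
      qed
      then show "\<exists>q\<in>Q. (v, q) \<in> conn_in E (V - S)" using wQ by blast
    qed
    have "|components E (V - S)| \<le>o |Q|" using components_le[OF QS cov] .
    moreover have "|Q| \<le>o |tree_level T le (Restr r (underS r \<beta>))|" unfolding Q_def by (intro card_of_mono1) auto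
    ultimately have "|components E (V - S)| \<le>o |tree_level T le (Restr r (underS r \<beta>))|"
      by (rule ordLeq_transitive)
    moreover have "|tree_level T le (Restr r (underS r \<beta>))| <o r" using lev b(1) by blast
    ultimately show "|components E (V - S)| <o r" by (rule ordLeq_ordLess_trans)
  qed
  have Un_ms: "\<Union>(ms B) = B" for B unfolding ms_def by auto
  have kmin: "K_minor r V E (ms B)" if B: "B \<in> Bs" for B
    unfolding K_minor_def
  proof (intro conjI ballI impI)
    have "bij_betw (\<lambda>x. {x}) B (ms B)" unfolding ms_def bij_betw_def inj_on_def by auto
    then have "|B| =o |ms B|" using card_of_ordIso by blast
    moreover have "|B| =o r" using B branch_card[OF tr _ _ C] unfolding Bs_def by blast
    ultimately show "|ms B| =o r" using ordIso_transitive[OF ordIso_symmetric] by blast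
  next
    fix A assume "A \<in> ms B"
    then obtain x where x: "x \<in> B" "A = {x}" unfolding ms_def by auto
    show "A \<subseteq> V" using x B unfolding V_def by auto
    show "induces_connected E A" unfolding induces_connected_def using x conn_refl[of x "{x}" E] by auto
  next
    fix A A' assume A: "A \<in> ms B" and A': "A' \<in> ms B" and ne: "A \<noteq> A'"
    obtain x where x: "x \<in> B" "A = {x}" using A unfolding ms_def by auto
    obtain y where y: "y \<in> B" "A' = {y}" using A' unfolding ms_def by auto
    show "A \<inter> A' = {}" using x y ne by auto
    have "(x, y) \<in> le \<or> (y, x) \<in> le"
      using B x y unfolding Bs_def is_branch_def is_chain_def by auto
    moreover have "x \<in> V" "y \<in> V" using x y B unfolding V_def by auto
    ultimately have "{x, y} \<in> E" using Eiff x y ne by auto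
    then show "\<exists>a\<in>A. \<exists>b\<in>A'. {a, b} \<in> E" using x y by auto
  qed
  have sep: "\<exists>S. S \<subseteq> V \<and> |S| <o r \<and> separates V E S (\<Union>(ms B)) (\<Union>(ms B'))"
    if B: "B \<in> Bs" and B': "B' \<in> Bs" and ne: "ms B \<noteq> ms B'" for B B'
  proof -
    have neB: "B \<noteq> B'" using ne by auto
    have Bb: "is_branch T le B" "Restr le B =o r" and Bb': "is_branch T le B'" "Restr le B' =o r"
      using B B' unfolding Bs_def by auto
    define S where "S = B \<inter> B'"
    have SV: "S \<subseteq> V" using B unfolding S_def V_def by auto
    obtain x where x: "x \<in> B" "x \<notin> B'"
    proof (rule ccontr)
      assume "\<not> thesis"
      then have "B \<subseteq> B'" using that by blast
      then have "B' = B" using Bb(1) branch_chain[OF Bb'(1)] unfolding is_branch_def by blast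
      then show False using neB by simp
    qed
    have xT: "x \<in> T" using x BsT B by auto
    have Sp: "S \<subseteq> tree_pred T le x"
    proof
      fix s assume s: "s \<in> S"
      have "(x, s) \<in> le \<or> (s, x) \<in> le" using s x Bb(1) unfolding S_def is_branch_def is_chain_def by auto
      moreover have "(x, s) \<notin> le" using branch_down[OF tr Bb'(1), of s x] s x unfolding S_def by auto
      ultimately have "(s, x) \<in> le" by auto
      moreover have "s \<noteq> x" using s x unfolding S_def by auto
      ultimately show "s \<in> tree_pred T le x" using sub unfolding tree_pred_def by auto
    qed
    obtain c where c: "c \<in> Field r" "x \<in> tree_level T le (Restr r (underS r c))"
      using tree_has_level[OF tr W hz xT] by blast
    have "Restr le (tree_pred T le x) =o Restr r (underS r c)" using c unfolding tree_level_def by auto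
    then have "|Field (Restr le (tree_pred T le x))| =o |Field (Restr r (underS r c))|" by (rule card_of_cong)
    then have "|tree_pred T le x| =o |Field (Restr r (underS r c))|" using tree_P_WO(2)[OF tr xT] by simp
    then have "|tree_pred T le x| <o r" using R_card_less[OF C c(1)] ordIso_ordLess_trans by blast
    then have Sc: "|S| <o r" using ordLeq_ordLess_trans[OF card_of_mono1[OF Sp]] by blast
    have "separates V E S B B'"
      unfolding separates_def
    proof (intro ballI notI)
      fix u y assume u: "u \<in> B - S" and y: "y \<in> B' - S" and uy: "(u, y) \<in> conn_in E (V - S)"
      define D where "D = {v. \<exists>u0\<in>B - B'. (u0, v) \<in> le}"
      have uD: "u \<in> D" using u BsT[OF B] rf unfolding D_def S_def refl_on_def by blast
      have "y \<in> D"
      proof (rule conn_closed[OF _ uy uD])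
        fix v w assume v: "v \<in> D" and vw: "(v, w) \<in> adj E" and w: "w \<in> V - S"
        obtain u0 where u0: "u0 \<in> B - B'" "(u0, v) \<in> le" using v unfolding D_def by auto
        have "(v, w) \<in> le \<or> (w, v) \<in> le" using adjE[OF vw] by auto
        then show "w \<in> D"
        proof
          assume "(v, w) \<in> le" then show ?thesis using u0 trr unfolding D_def trans_def by blast
        next
          assume wv: "(w, v) \<in> le"
          have "(u0, w) \<in> le \<or> (w, u0) \<in> le" using tree_cmp[OF tr u0(2) wv] .
          then show ?thesis
          proof
            assume "(u0, w) \<in> le" then show ?thesis using u0 unfolding D_def by blast
          next
            assume "(w, u0) \<in> le"
            then have "w \<in> B" using branch_down[OF tr Bb(1)] u0 by blast
            then have "w \<in> B - B'" using w unfolding S_def by auto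
            moreover have "(w, w) \<in> le" using \<open>w \<in> B\<close> BsT[OF B] rf unfolding refl_on_def by blast
            ultimately show ?thesis unfolding D_def by blast
          qed
        qed
      qed
      then obtain u0 where "u0 \<in> B - B'" "(u0, y) \<in> le" unfolding D_def by auto
      then show False using branch_down[OF tr Bb'(1), of y u0] y by auto
    qed
    then show ?thesis using SV Sc Un_ms by auto
  qed
  have kmf: "kurepa_minor_family r V E F"
    unfolding kurepa_minor_family_def F_def using kmin sep by blast
  have "inj_on ms Bs" using Un_ms unfolding inj_on_def by metis
  then have "bij_betw ms Bs F" unfolding F_def bij_betw_def by auto
  then have "|Bs| =o |F|" using card_of_ordIso by blast
  then have "cardSuc r \<le>o |F|" using ordLeq_ordIso_trans[OF br] unfolding Bs_def by blast
  then show ?thesis using graph Viso kl kmf by blast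
qed



lemma kurepa_transport:
  fixes T :: "'c set" and le :: "'c rel" and f :: "'c \<Rightarrow> 'a" and r :: "'b rel"
  assumes K: "kurepa_tree r T le" and inj: "inj_on f T"
  shows "kurepa_tree r (f ` T) (map_prod f f ` le)"
proof -
  define le' where "le' = map_prod f f ` le"
  define T' where "T' = f ` T"
  have tr: "is_tree T le" and hz: "tree_level T le r = {}"
    and hne: "\<forall>a\<in>Field r. tree_level T le (Restr r (underS r a)) \<noteq> {}"
    and lev: "\<forall>a\<in>Field r. |tree_level T le (Restr r (underS r a))| <o r"
    and br: "cardSuc r \<le>o |{B. is_branch T le B \<and> Restr le B =o r}|"
    using K unfolding kurepa_tree_def tree_height_is_def by auto
  have sub: "le \<subseteq> T \<times> T" and rf: "refl_on T le" and an: "antisym le" and trr: "trans le"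
    using tree_basic[OF tr] by auto
  have key: "(f x, f y) \<in> le' \<longleftrightarrow> (x, y) \<in> le" if "x \<in> T" "y \<in> T" for x y
  proof
    assume "(f x, f y) \<in> le'"
    then obtain a b where ab: "(a, b) \<in> le" "f a = f x" "f b = f y" unfolding le'_def by auto
    then have "a \<in> T" "b \<in> T" using sub by auto
    then have "a = x" "b = y" using ab inj that unfolding inj_on_def by auto
    then show "(x, y) \<in> le" using ab by simp
  qed (auto simp: le'_def)
  have le'_sub: "le' \<subseteq> T' \<times> T'" using sub unfolding le'_def T'_def by auto
  have le'_cases: "\<exists>x y. x \<in> T \<and> y \<in> T \<and> p = (f x, f y) \<and> (x, y) \<in> le" if "p \<in> le'" for p
    using that sub unfolding le'_def by auto
  have pred': "tree_pred T' le' (f t) = f ` tree_pred T le t" if t: "t \<in> T" for t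
  proof
    show "tree_pred T' le' (f t) \<subseteq> f ` tree_pred T le t"
    proof
      fix s' assume "s' \<in> tree_pred T' le' (f t)"
      then obtain s where s: "s \<in> T" "s' = f s" "(f s, f t) \<in> le'" "f s \<noteq> f t"
        unfolding tree_pred_def T'_def by auto
      then have "(s, t) \<in> le" "s \<noteq> t" using key t by auto
      then show "s' \<in> f ` tree_pred T le t" using s unfolding tree_pred_def by auto
    qed
  next
    show "f ` tree_pred T le t \<subseteq> tree_pred T' le' (f t)"
    proof
      fix s' assume "s' \<in> f ` tree_pred T le t"
      then obtain s where s: "s \<in> T" "s' = f s" "(s, t) \<in> le" "s \<noteq> t"
        unfolding tree_pred_def by auto
      then have "(f s, f t) \<in> le'" "f s \<noteq> f t" using key t inj unfolding inj_on_def by auto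
      then show "s' \<in> tree_pred T' le' (f t)" using s unfolding tree_pred_def T'_def by auto
    qed
  qed
  have restr': "Restr le' (f ` A) = dir_image (Restr le A) f" if A: "A \<subseteq> T" for A
  proof
    show "Restr le' (f ` A) \<subseteq> dir_image (Restr le A) f"
    proof
      fix p assume p: "p \<in> Restr le' (f ` A)"
      then obtain x y where xy: "x \<in> A" "y \<in> A" "p = (f x, f y)" by auto
      then have "(x, y) \<in> le" using key A p by auto
      then show "p \<in> dir_image (Restr le A) f" using xy unfolding dir_image_def by auto
    qed
  next
    show "dir_image (Restr le A) f \<subseteq> Restr le' (f ` A)"
      unfolding dir_image_def le'_def by auto
  qed
  have Piso: "Restr le (tree_pred T le t) =o Restr le' (tree_pred T' le' (f t))" if t: "t \<in> T" for t
  proof -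
    have ps: "tree_pred T le t \<subseteq> T" unfolding tree_pred_def by auto
    have "Restr le' (tree_pred T' le' (f t)) = dir_image (Restr le (tree_pred T le t)) f"
      using pred'[OF t] restr'[OF ps] by simp
    moreover have "inj_on f (Field (Restr le (tree_pred T le t)))"
      using inj_on_subset[OF inj] ps tree_P_WO(2)[OF tr t] by simp
    ultimately show ?thesis using dir_image_ordIso[OF tree_P_WO(1)[OF tr t]] by simp
  qed
  have levels: "tree_level T' le' w = f ` tree_level T le w" for w :: "'d rel"
  proof
    show "tree_level T' le' w \<subseteq> f ` tree_level T le w"
    proof
      fix t' assume "t' \<in> tree_level T' le' w"
      then obtain t where t: "t \<in> T" "t' = f t" "Restr le' (tree_pred T' le' (f t)) =o w"
        unfolding tree_level_def T'_def by auto
      then have "Restr le (tree_pred T le t) =o w" using ordIso_transitive[OF Piso[OF t(1)]] by blast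
      then show "t' \<in> f ` tree_level T le w" using t unfolding tree_level_def by auto
    qed
  next
    show "f ` tree_level T le w \<subseteq> tree_level T' le' w"
    proof
      fix t' assume "t' \<in> f ` tree_level T le w"
      then obtain t where t: "t \<in> T" "t' = f t" "Restr le (tree_pred T le t) =o w"
        unfolding tree_level_def by auto
      then have "Restr le' (tree_pred T' le' (f t)) =o w"
        using ordIso_transitive[OF ordIso_symmetric[OF Piso[OF t(1)]]] by blast
      then show "t' \<in> tree_level T' le' w" using t unfolding tree_level_def T'_def by auto
    qed
  qed
  have tree': "is_tree T' le'"
    unfolding is_tree_def
  proof (intro conjI ballI)
    show "le' \<subseteq> T' \<times> T'" by (rule le'_sub)
    show "refl_on T' le'" using rf key unfolding refl_on_def T'_def by auto
    show "antisym le'"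
      unfolding antisym_def
    proof (intro allI impI)
      fix a b
      assume ab: "(a, b) \<in> le'" and ba: "(b, a) \<in> le'"
      obtain x y where xy: "x \<in> T" "y \<in> T" "a = f x" "b = f y" "(x, y) \<in> le" using le'_cases[OF ab] by auto
      then have "(y, x) \<in> le" using ba key by auto
      then show "a = b" using xy an unfolding antisym_def by auto
    qed
    show "trans le'"
      unfolding trans_def
    proof (intro allI impI)
      fix a b c assume ab: "(a, b) \<in> le'" and bc: "(b, c) \<in> le'"
      obtain x y where xy: "x \<in> T" "y \<in> T" "a = f x" "b = f y" "(x, y) \<in> le" using le'_cases[OF ab] by auto
      obtain y' z where yz: "y' \<in> T" "z \<in> T" "b = f y'" "c = f z" "(y', z) \<in> le" using le'_cases[OF bc] by auto
      have "y = y'" using xy yz inj unfolding inj_on_def by auto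
      then have "(x, z) \<in> le" using xy yz trr unfolding trans_def by blast
      then show "(a, c) \<in> le'" using xy yz key by auto
    qed
    fix t' assume "t' \<in> T'"
    then obtain t where t: "t \<in> T" "t' = f t" unfolding T'_def by auto
    have ps: "tree_pred T le t \<subseteq> T" unfolding tree_pred_def by auto
    have eq: "Restr le' (tree_pred T' le' t') = dir_image (Restr le (tree_pred T le t)) f"
      using pred'[OF t(1)] restr'[OF ps] t by simp
    have "inj_on f (Field (Restr le (tree_pred T le t)))"
      using inj_on_subset[OF inj] ps tree_P_WO(2)[OF tr t(1)] by simp
    then have "Well_order (Restr le' (tree_pred T' le' t'))"
      using eq Well_order_dir_image[OF tree_P_WO(1)[OF tr t(1)]] by simp
    moreover have "Field (Restr le' (tree_pred T' le' t')) = tree_pred T' le' t'"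
      using eq dir_image_Field[of "Restr le (tree_pred T le t)" f] pred'[OF t(1)] tree_P_WO(2)[OF tr t(1)] t by simp
    ultimately show "well_order_on (tree_pred T' le' t') (Restr le' (tree_pred T' le' t'))" by simp
  qed
  have height': "tree_height_is T' le' r"
    unfolding tree_height_is_def levels using hne hz by auto
  have lev': "\<forall>a\<in>Field r. |tree_level T' le' (Restr r (underS r a))| <o r"
    unfolding levels using lev ordLeq_ordLess_trans[OF card_of_image] by blast
  define Bs where "Bs = {B. is_branch T le B \<and> Restr le B =o r}"
  define Bs' where "Bs' = {B. is_branch T' le' B \<and> Restr le' B =o r}"
  have imgB: "f ` B \<in> Bs'" if B: "B \<in> Bs" for B
  proof -
    have Bb: "is_branch T le B" and Bi: "Restr le B =o r" using B unfolding Bs_def by auto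
    have BT: "B \<subseteq> T" using Bb unfolding is_branch_def is_chain_def by auto
    have ch': "is_chain T' le' (f ` B)"
      unfolding is_chain_def
    proof (intro conjI ballI)
      show "f ` B \<subseteq> T'" using BT unfolding T'_def by auto
      fix a b assume "a \<in> f ` B" "b \<in> f ` B"
      then obtain x y where xy: "x \<in> B" "y \<in> B" "a = f x" "b = f y" by auto
      have "(x, y) \<in> le \<or> (y, x) \<in> le" using Bb xy(1,2) unfolding is_branch_def is_chain_def by blast
      moreover have "x \<in> T" "y \<in> T" using xy BT by auto
      ultimately show "(a, b) \<in> le' \<or> (b, a) \<in> le'" using key[of x y] key[of y x] xy by blast
    qed
    have mx: "C' = f ` B" if C': "is_chain T' le' C'" "f ` B \<subseteq> C'" for C'
    proof -
      define C where "C = T \<inter> f -` C'"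
      have "is_chain T le C"
        unfolding is_chain_def
      proof (intro conjI ballI)
        show "C \<subseteq> T" unfolding C_def by auto
        fix x y assume xy: "x \<in> C" "y \<in> C"
        then have "(f x, f y) \<in> le' \<or> (f y, f x) \<in> le'" using C'(1) unfolding C_def is_chain_def by blast
        moreover have "x \<in> T" "y \<in> T" using xy unfolding C_def by auto
        ultimately show "(x, y) \<in> le \<or> (y, x) \<in> le" using key[of x y] key[of y x] by blast
      qed
      moreover have "B \<subseteq> C" using BT C' unfolding C_def by auto
      ultimately have "C = B" using Bb unfolding is_branch_def by blast
      moreover have "C' = f ` C" using C' unfolding C_def is_chain_def T'_def by auto
      ultimately show ?thesis by simp
    qed
    have "is_branch T' le' (f ` B)" using ch' mx unfolding is_branch_def by blast
    moreover have "Restr le' (f ` B) =o r"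
    proof -
      have W: "Well_order (Restr le B)" using ordIso_WO[OF Bi] by auto
      have "Field (Restr le B) \<subseteq> T" using Field_Restr_subset[of le B] BT by (rule subset_trans)
      then have "inj_on f (Field (Restr le B))" by (rule inj_on_subset[OF inj])
      then have "Restr le B =o dir_image (Restr le B) f" using dir_image_ordIso[OF W] by blast
      then have "Restr le B =o Restr le' (f ` B)" using restr'[OF BT] by simp
      then show ?thesis by (rule ordIso_transitive[OF ordIso_symmetric Bi])
    qed
    ultimately show ?thesis unfolding Bs'_def by blast
  qed
  have "inj_on (\<lambda>B. f ` B) Bs"
  proof (rule inj_onI)
    fix B1 B2 assume "B1 \<in> Bs" "B2 \<in> Bs" "f ` B1 = f ` B2"
    moreover have "B1 \<subseteq> T" "B2 \<subseteq> T" using calculation unfolding Bs_def is_branch_def is_chain_def by auto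
    ultimately show "B1 = B2" using inj_on_image_eq_iff[OF inj] by blast
  qed
  moreover have "(\<lambda>B. f ` B) ` Bs \<subseteq> Bs'" using imgB by blast
  ultimately have "|Bs| \<le>o |Bs'|" using card_of_ordLeq[of Bs Bs'] by blast
  then have br': "cardSuc r \<le>o |Bs'|" using ordLeq_transitive[OF br] unfolding Bs_def by blast
  show ?thesis
    unfolding kurepa_tree_def using tree' height' lev' br' unfolding le'_def T'_def Bs'_def by blast
qed



locale bw =
  fixes r :: "'a rel" and V :: "'a set" and E :: "'a set set" and F :: "'a set set set"
    and g :: "'a \<Rightarrow> 'a"
  assumes C: "Card_order r" and inf: "infinite (Field r)" and reg: "regularCard r"
    and kl: "kl_connected r r V E" and kmf: "kurepa_minor_family r V E F"
    and Fc: "cardSuc r \<le>o |F|" and g: "bij_betw g (Field r) V"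
begin

definition Va :: "'a \<Rightarrow> 'a set" where "Va \<alpha> = g ` underS r \<alpha>"
definition good :: "'a set set \<Rightarrow> 'a \<Rightarrow> 'a set set" where
  "good W \<alpha> = {X\<in>W. X \<inter> Va \<alpha> = {}}"
definition Cc :: "'a set set \<Rightarrow> 'a \<Rightarrow> 'a set" where
  "Cc W \<alpha> = {y. \<exists>X\<in>good W \<alpha>. \<exists>x\<in>X. (x, y) \<in> conn_in E (V - Va \<alpha>)}"

lemma W: "Well_order r" using card_order_on_well_order_on C by blast

lemma r_props: "refl_on (Field r) r" "trans r" "antisym r" "total_on (Field r) r"
  using W unfolding well_order_on_def linear_order_on_def partial_order_on_def preorder_on_def by auto

lemma VaV: "Va \<alpha> \<subseteq> V"
proof -
  have "g ` underS r \<alpha> \<subseteq> g ` Field r" using underS_sub_Field by (rule image_mono)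
  then show ?thesis using g unfolding Va_def bij_betw_def by simp
qed

lemma Vac: "\<alpha> \<in> Field r \<Longrightarrow> |Va \<alpha>| <o r"
  unfolding Va_def using ordLeq_ordLess_trans[OF card_of_image card_of_underS[OF C]] by blast

lemma underS_mono: assumes "(\<alpha>, \<alpha>') \<in> r" shows "underS r \<alpha> \<subseteq> underS r \<alpha>'"
  using assms r_props(2,3) unfolding underS_def trans_def antisym_def by blast

lemma Va_mono: "(\<alpha>, \<alpha>') \<in> r \<Longrightarrow> Va \<alpha> \<subseteq> Va \<alpha>'"
  unfolding Va_def using underS_mono by (rule image_mono)

lemma Kmin: "W \<in> F \<Longrightarrow> K_minor r V E W"
  using kmf unfolding kurepa_minor_family_def by blast

lemma good_ne:
  assumes WF: "W \<in> F" and a: "\<alpha> \<in> Field r"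
  shows "good W \<alpha> \<noteq> {}"
proof
  assume gd: "good W \<alpha> = {}"
  have Wc: "|W| =o r" and disj: "\<forall>A\<in>W. \<forall>B\<in>W. A \<noteq> B \<longrightarrow> A \<inter> B = {}"
    using Kmin[OF WF] unfolding K_minor_def by auto
  define pick where "pick = (\<lambda>X. SOME v. v \<in> X \<inter> Va \<alpha>)"
  have pk: "pick X \<in> X \<inter> Va \<alpha>" if "X \<in> W" for X
  proof -
    have "X \<inter> Va \<alpha> \<noteq> {}" using gd that unfolding good_def by blast
    then show ?thesis unfolding pick_def by (metis ex_in_conv someI_ex)
  qed
  have "inj_on pick W"
  proof (rule inj_onI)
    fix X Y assume X: "X \<in> W" and Y: "Y \<in> W" and eq: "pick X = pick Y"
    have "pick X \<in> X \<inter> Y" using pk[OF X] pk[OF Y] eq by auto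
    then show "X = Y" using disj X Y by blast
  qed
  moreover have "pick ` W \<subseteq> Va \<alpha>" using pk by blast
  ultimately have "|W| \<le>o |Va \<alpha>|" using card_of_ordLeq[of W "Va \<alpha>"] by blast
  then have "|W| <o r" using ordLeq_ordLess_trans[OF _ Vac[OF a]] by blast
  then show False using Wc not_ordLess_ordIso by blast
qed

lemma conn_trans: "(x, y) \<in> conn_in E U \<Longrightarrow> (y, z) \<in> conn_in E U \<Longrightarrow> (x, z) \<in> conn_in E U"
  using conn_equiv[of U E] unfolding equiv_def trans_def by blast

lemma conn_symm: "(x, y) \<in> conn_in E U \<Longrightarrow> (y, x) \<in> conn_in E U"
  using conn_equiv[of U E] unfolding equiv_def sym_def by blast

lemma Cc_class:
  assumes WF: "W \<in> F" and a: "\<alpha> \<in> Field r"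
  shows "\<exists>x0. x0 \<in> V - Va \<alpha> \<and> Cc W \<alpha> = conn_in E (V - Va \<alpha>) `` {x0}"
proof -
  let ?U = "V - Va \<alpha>"
  have KM: "K_minor r V E W" using Kmin[OF WF] .
  obtain X0 where X0: "X0 \<in> good W \<alpha>" using good_ne[OF WF a] by blast
  have gsub: "X \<subseteq> ?U" if "X \<in> good W \<alpha>" for X
    using that KM unfolding good_def K_minor_def by blast
  have gic: "induces_connected E X" if "X \<in> good W \<alpha>" for X
    using that KM unfolding good_def K_minor_def by blast
  obtain x0 where x0: "x0 \<in> X0" using gic[OF X0] unfolding induces_connected_def by blast
  have x0U: "x0 \<in> ?U" using gsub[OF X0] x0 by blast
  have reach: "(x0, x) \<in> conn_in E ?U" if X: "X \<in> good W \<alpha>" and x: "x \<in> X" for X x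
  proof (cases "X = X0")
    case True
    then have "(x0, x) \<in> conn_in E X0" using gic[OF X0] x0 x unfolding induces_connected_def by blast
    then show ?thesis using conn_mono[OF gsub[OF X0]] by blast
  next
    case False
    have "X0 \<in> W" "X \<in> W" using X0 X unfolding good_def by auto
    then obtain a b where ab: "a \<in> X0" "b \<in> X" "{a, b} \<in> E"
      using KM False unfolding K_minor_def by metis
    have 1: "(x0, a) \<in> conn_in E ?U"
      using gic[OF X0] x0 ab(1) conn_mono[OF gsub[OF X0]] unfolding induces_connected_def by blast
    have 2: "(a, b) \<in> conn_in E ?U"
      using conn_edge[OF _ _ ab(3)] ab(1,2) gsub[OF X0] gsub[OF X] by blast
    have 3: "(b, x) \<in> conn_in E ?U"
      using gic[OF X] x ab(2) conn_mono[OF gsub[OF X]] unfolding induces_connected_def by blast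
    show ?thesis using conn_trans[OF conn_trans[OF 1 2] 3] .
  qed
  have "Cc W \<alpha> = conn_in E ?U `` {x0}"
  proof
    show "Cc W \<alpha> \<subseteq> conn_in E ?U `` {x0}"
    proof
      fix y assume "y \<in> Cc W \<alpha>"
      then obtain X x where "X \<in> good W \<alpha>" "x \<in> X" "(x, y) \<in> conn_in E ?U" unfolding Cc_def by blast
      then have "(x0, y) \<in> conn_in E ?U" using reach conn_trans by blast
      then show "y \<in> conn_in E ?U `` {x0}" by blast
    qed
    show "conn_in E ?U `` {x0} \<subseteq> Cc W \<alpha>" using X0 x0 unfolding Cc_def by blast
  qed
  then show ?thesis using x0U by blast
qed

lemma Cc_comp: "W \<in> F \<Longrightarrow> \<alpha> \<in> Field r \<Longrightarrow> Cc W \<alpha> \<in> components E (V - Va \<alpha>)"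
  using Cc_class components_class by metis

lemma Cc_ne: "W \<in> F \<Longrightarrow> \<alpha> \<in> Field r \<Longrightarrow> Cc W \<alpha> \<noteq> {}"
  using Cc_comp components_nonempty by blast

lemma Cc_eq: "W \<in> F \<Longrightarrow> W' \<in> F \<Longrightarrow> \<alpha> \<in> Field r \<Longrightarrow> Cc W \<alpha> \<inter> Cc W' \<alpha> \<noteq> {} \<Longrightarrow> Cc W \<alpha> = Cc W' \<alpha>"
  using Cc_comp components_disj by blast

lemma Cc_mono:
  assumes "(\<alpha>, \<alpha>') \<in> r" shows "Cc W \<alpha>' \<subseteq> Cc W \<alpha>"
proof -
  have va: "Va \<alpha> \<subseteq> Va \<alpha>'" using Va_mono[OF assms] .
  then have "good W \<alpha>' \<subseteq> good W \<alpha>" unfolding good_def by blast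
  moreover have "conn_in E (V - Va \<alpha>') \<subseteq> conn_in E (V - Va \<alpha>)" using va by (intro conn_mono) blast
  ultimately show ?thesis unfolding Cc_def by blast
qed

lemma sep_diff:
  assumes WF: "W \<in> F" and WF': "W' \<in> F" and ne: "W \<noteq> W'"
  shows "\<exists>\<alpha>\<in>Field r. Cc W \<alpha> \<noteq> Cc W' \<alpha>"
proof -
  obtain S where SV: "S \<subseteq> V" and Sc: "|S| <o r" and sep: "separates V E S (\<Union>W) (\<Union>W')"
    using kmf WF WF' ne unfolding kurepa_minor_family_def by blast
  define K where "K = inv_into (Field r) g ` S"
  have gs: "g ` Field r = V" using g unfolding bij_betw_def by auto
  have KF: "K \<subseteq> Field r" unfolding K_def using SV gs by (auto intro: inv_into_into)
  have "|K| <o r" unfolding K_def using ordLeq_ordLess_trans[OF card_of_image Sc] .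
  then have "\<not> cofinal K r" using reg KF not_ordLess_ordIso unfolding regularCard_def by blast
  then obtain a where a: "a \<in> Field r" "\<forall>b\<in>K. a = b \<or> (a, b) \<notin> r" unfolding cofinal_def by blast
  obtain \<alpha> where al: "\<alpha> \<in> Field r" "a \<noteq> \<alpha>" "(a, \<alpha>) \<in> r"
    using infinite_Card_order_limit[OF C inf a(1)] by blast
  have SVa: "S \<subseteq> Va \<alpha>"
  proof
    fix s assume s: "s \<in> S"
    define k where "k = inv_into (Field r) g s"
    have kK: "k \<in> K" using s unfolding k_def K_def by blast
    have kF: "k \<in> Field r" using kK KF by blast
    have gk: "g k = s" using s SV gs unfolding k_def by (metis f_inv_into_f subsetD)
    have "k \<in> underS r \<alpha>"
    proof (cases "k = a")
      case True then show ?thesis using al unfolding underS_def by auto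
    next
      case False
      then have "(a, k) \<notin> r" using a(2) kK by metis
      then have "(k, a) \<in> r" using r_props(4) kF a(1) False unfolding total_on_def by blast
      then have "(k, \<alpha>) \<in> r" using al(3) r_props(2) unfolding trans_def by blast
      moreover have "k \<noteq> \<alpha>" using \<open>(a, k) \<notin> r\<close> al(3) by auto
      ultimately show ?thesis unfolding underS_def by auto
    qed
    then show "s \<in> Va \<alpha>" using gk unfolding Va_def by blast
  qed
  have "Cc W \<alpha> \<noteq> Cc W' \<alpha>"
  proof
    assume eq: "Cc W \<alpha> = Cc W' \<alpha>"
    obtain X where X: "X \<in> good W \<alpha>" using good_ne[OF WF al(1)] by blast
    have KM: "K_minor r V E W" using Kmin[OF WF] .
    have "induces_connected E X" "X \<subseteq> V" using X KM unfolding good_def K_minor_def by auto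
    then obtain x where x: "x \<in> X" unfolding induces_connected_def by blast
    have xU: "x \<in> V - Va \<alpha>" using x X \<open>X \<subseteq> V\<close> unfolding good_def by blast
    have "x \<in> Cc W \<alpha>" using X x conn_refl[OF xU] unfolding Cc_def by blast
    then have "x \<in> Cc W' \<alpha>" using eq by simp
    then obtain Y y where Y: "Y \<in> good W' \<alpha>" "y \<in> Y" "(y, x) \<in> conn_in E (V - Va \<alpha>)"
      unfolding Cc_def by blast
    have "V - Va \<alpha> \<subseteq> V - S" using SVa by blast
    then have "(x, y) \<in> conn_in E (V - S)" using conn_mono conn_symm[OF Y(3)] by blast
    moreover have "x \<in> \<Union>W - S" using x X xU SVa unfolding good_def by blast
    moreover have "y \<in> \<Union>W' - S" using Y SVa unfolding good_def by blast
    ultimately show False using sep unfolding separates_def by blast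
  qed
  then show ?thesis using al(1) by blast
qed

end



context bw begin

definition h :: "'a set set \<Rightarrow> 'a \<Rightarrow> 'a \<times> 'a set" where "h W \<alpha> = (\<alpha>, Cc W \<alpha>)"
definition T0 :: "('a \<times> 'a set) set" where "T0 = {h W \<alpha> | W \<alpha>. W \<in> F \<and> \<alpha> \<in> Field r}"
definition le0 :: "('a \<times> 'a set) rel" where
  "le0 = {(p, q). p \<in> T0 \<and> q \<in> T0 \<and> (fst p, fst q) \<in> r \<and> snd q \<subseteq> snd p}"

lemma hT0: "W \<in> F \<Longrightarrow> \<alpha> \<in> Field r \<Longrightarrow> h W \<alpha> \<in> T0"
  unfolding T0_def by blast

lemma T0E: "p \<in> T0 \<Longrightarrow> \<exists>W \<alpha>. W \<in> F \<and> \<alpha> \<in> Field r \<and> p = h W \<alpha>"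
  unfolding T0_def by blast

lemma fst_h[simp]: "fst (h W \<alpha>) = \<alpha>" and snd_h[simp]: "snd (h W \<alpha>) = Cc W \<alpha>"
  unfolding h_def by auto

lemma le0_h:
  assumes "W \<in> F" "a \<in> Field r" "b \<in> Field r" "(a, b) \<in> r"
  shows "(h W a, h W b) \<in> le0"
proof -
  have "h W a \<in> T0" "h W b \<in> T0" using hT0 assms by auto
  moreover have "Cc W b \<subseteq> Cc W a" using Cc_mono[OF assms(4)] .
  ultimately show ?thesis unfolding le0_def using assms(4) by simp
qed

lemma inj_h: "inj_on (h W) A"
  unfolding inj_on_def h_def by auto

lemma restr0:
  assumes WF: "W \<in> F" and A: "A \<subseteq> Field r"
  shows "Restr le0 (h W ` A) = dir_image (Restr r A) (h W)"
proof
  show "Restr le0 (h W ` A) \<subseteq> dir_image (Restr r A) (h W)"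
  proof
    fix p assume p: "p \<in> Restr le0 (h W ` A)"
    then obtain a b where ab: "a \<in> A" "b \<in> A" "p = (h W a, h W b)" by blast
    then have "(a, b) \<in> r" using p unfolding le0_def by auto
    then show "p \<in> dir_image (Restr r A) (h W)" using ab unfolding dir_image_def by blast
  qed
  show "dir_image (Restr r A) (h W) \<subseteq> Restr le0 (h W ` A)"
  proof
    fix p assume "p \<in> dir_image (Restr r A) (h W)"
    then obtain a b where ab: "a \<in> A" "b \<in> A" "(a, b) \<in> r" "p = (h W a, h W b)"
      unfolding dir_image_def by blast
    have "(h W a, h W b) \<in> le0" using le0_h[OF WF _ _ ab(3)] ab(1,2) A by blast
    then show "p \<in> Restr le0 (h W ` A)" using ab by blast
  qed
qed

lemma pred0:
  assumes WF: "W \<in> F" and a: "\<alpha> \<in> Field r"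
  shows "tree_pred T0 le0 (h W \<alpha>) = h W ` underS r \<alpha>"
proof
  show "h W ` underS r \<alpha> \<subseteq> tree_pred T0 le0 (h W \<alpha>)"
  proof
    fix q assume "q \<in> h W ` underS r \<alpha>"
    then obtain \<gamma> where g: "\<gamma> \<in> underS r \<alpha>" "q = h W \<gamma>" by blast
    have gF: "\<gamma> \<in> Field r" using g(1) underS_sub_Field[of r \<alpha>] by blast
    have "(\<gamma>, \<alpha>) \<in> r" "\<gamma> \<noteq> \<alpha>" using g(1) unfolding underS_def by auto
    then have "(q, h W \<alpha>) \<in> le0" "q \<noteq> h W \<alpha>" using le0_h[OF WF gF a] g(2) unfolding h_def by auto
    then show "q \<in> tree_pred T0 le0 (h W \<alpha>)" using hT0[OF WF gF] g(2) unfolding tree_pred_def by blast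
  qed
  show "tree_pred T0 le0 (h W \<alpha>) \<subseteq> h W ` underS r \<alpha>"
  proof
    fix q assume q: "q \<in> tree_pred T0 le0 (h W \<alpha>)"
    then have qT: "q \<in> T0" and ql: "(q, h W \<alpha>) \<in> le0" and qn: "q \<noteq> h W \<alpha>" unfolding tree_pred_def by auto
    obtain W' \<gamma> where W': "W' \<in> F" "\<gamma> \<in> Field r" "q = h W' \<gamma>" using T0E[OF qT] by blast
    have gr: "(\<gamma>, \<alpha>) \<in> r" and sub: "Cc W \<alpha> \<subseteq> Cc W' \<gamma>" using ql W'(3) unfolding le0_def by auto
    have "Cc W \<alpha> \<subseteq> Cc W \<gamma>" using Cc_mono[OF gr] .
    then have "Cc W' \<gamma> \<inter> Cc W \<gamma> \<noteq> {}" using sub Cc_ne[OF WF a] by blast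
    then have "Cc W' \<gamma> = Cc W \<gamma>" using Cc_eq[OF W'(1) WF W'(2)] by blast
    then have qh: "q = h W \<gamma>" using W'(3) unfolding h_def by simp
    then have "\<gamma> \<noteq> \<alpha>" using qn by auto
    then have "\<gamma> \<in> underS r \<alpha>" using gr unfolding underS_def by auto
    then show "q \<in> h W ` underS r \<alpha>" using qh by blast
  qed
qed

lemma P0:
  assumes WF: "W \<in> F" and a: "\<alpha> \<in> Field r"
  shows "Restr le0 (tree_pred T0 le0 (h W \<alpha>)) =o Restr r (underS r \<alpha>)"
    "Well_order (Restr le0 (tree_pred T0 le0 (h W \<alpha>)))"
    "Field (Restr le0 (tree_pred T0 le0 (h W \<alpha>))) = tree_pred T0 le0 (h W \<alpha>)"
proof -
  have eq: "Restr le0 (tree_pred T0 le0 (h W \<alpha>)) = dir_image (Restr r (underS r \<alpha>)) (h W)"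
    using pred0[OF WF a] restr0[OF WF underS_sub_Field] by simp
  have WR: "Well_order (Restr r (underS r \<alpha>))" using W Well_order_Restr by blast
  have iso: "Restr r (underS r \<alpha>) =o dir_image (Restr r (underS r \<alpha>)) (h W)"
    using dir_image_ordIso[OF WR inj_h] .
  then show "Restr le0 (tree_pred T0 le0 (h W \<alpha>)) =o Restr r (underS r \<alpha>)"
    using eq ordIso_symmetric by simp
  show "Well_order (Restr le0 (tree_pred T0 le0 (h W \<alpha>)))" using eq Well_order_dir_image[OF WR inj_h] by simp
  have "Field (Restr r (underS r \<alpha>)) = underS r \<alpha>" using wo_Field_Restr[OF W underS_sub_Field] .
  then show "Field (Restr le0 (tree_pred T0 le0 (h W \<alpha>))) = tree_pred T0 le0 (h W \<alpha>)"
    using eq dir_image_Field[of "Restr r (underS r \<alpha>)" "h W"] pred0[OF WF a] by simp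
qed

lemma tree0: "is_tree T0 le0"
  unfolding is_tree_def
proof (intro conjI ballI)
  show "le0 \<subseteq> T0 \<times> T0" unfolding le0_def by auto
  show "refl_on T0 le0"
    unfolding refl_on_def
  proof
    fix p assume p: "p \<in> T0"
    then obtain W \<alpha> where "W \<in> F" "\<alpha> \<in> Field r" "p = h W \<alpha>" using T0E by blast
    then have "(fst p, fst p) \<in> r" using r_props(1) unfolding refl_on_def by simp
    then show "(p, p) \<in> le0" using p unfolding le0_def by simp
  qed
  show "antisym le0"
    unfolding antisym_def
  proof (intro allI impI)
    fix p q assume "(p, q) \<in> le0" "(q, p) \<in> le0"
    then have "(fst p, fst q) \<in> r" "(fst q, fst p) \<in> r" "snd p = snd q" unfolding le0_def by auto
    then show "p = q" using r_props(3) unfolding antisym_def by (simp add: prod_eq_iff)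
  qed
  show "trans le0"
    unfolding trans_def
  proof (intro allI impI)
    fix p q s assume pq: "(p, q) \<in> le0" and qs: "(q, s) \<in> le0"
    have 1: "p \<in> T0" "s \<in> T0" "(fst p, fst q) \<in> r" "(fst q, fst s) \<in> r" "snd q \<subseteq> snd p" "snd s \<subseteq> snd q"
      using pq qs unfolding le0_def by auto
    have "(fst p, fst s) \<in> r" using 1(3,4) r_props(2) unfolding trans_def by blast
    moreover have "snd s \<subseteq> snd p" using 1(5,6) by (rule subset_trans[rotated])
    ultimately show "(p, s) \<in> le0" using 1(1,2) unfolding le0_def by simp
  qed
  fix t assume t: "t \<in> T0"
  then obtain W \<alpha> where W: "W \<in> F" "\<alpha> \<in> Field r" "t = h W \<alpha>" using T0E by blast
  show "well_order_on (tree_pred T0 le0 t) (Restr le0 (tree_pred T0 le0 t))"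
    using P0(2,3)[OF W(1,2)] W(3) by simp
qed

lemma P0':
  assumes t: "t \<in> T0" shows "Restr le0 (tree_pred T0 le0 t) =o Restr r (underS r (fst t))"
proof -
  obtain W \<alpha> where W: "W \<in> F" "\<alpha> \<in> Field r" "t = h W \<alpha>" using T0E[OF t] by blast
  show ?thesis using P0(1)[OF W(1,2)] W(3) by simp
qed

lemma lev0:
  assumes b: "\<beta> \<in> Field r"
  shows "tree_level T0 le0 (Restr r (underS r \<beta>)) = {p\<in>T0. fst p = \<beta>}"
proof
  show "tree_level T0 le0 (Restr r (underS r \<beta>)) \<subseteq> {p\<in>T0. fst p = \<beta>}"
  proof
    fix p assume "p \<in> tree_level T0 le0 (Restr r (underS r \<beta>))"
    then have p: "p \<in> T0" "Restr le0 (tree_pred T0 le0 p) =o Restr r (underS r \<beta>)"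
      unfolding tree_level_def by auto
    have "Restr r (underS r (fst p)) =o Restr r (underS r \<beta>)"
      using ordIso_transitive[OF ordIso_symmetric[OF P0'[OF p(1)]] p(2)] .
    moreover have "fst p \<in> Field r" using T0E[OF p(1)] by auto
    ultimately have "fst p = \<beta>" using wo_R_inj[OF W _ b] by blast
    then show "p \<in> {p\<in>T0. fst p = \<beta>}" using p by blast
  qed
  show "{p\<in>T0. fst p = \<beta>} \<subseteq> tree_level T0 le0 (Restr r (underS r \<beta>))"
  proof
    fix p assume p: "p \<in> {p\<in>T0. fst p = \<beta>}"
    then have "Restr le0 (tree_pred T0 le0 p) =o Restr r (underS r \<beta>)" using P0'[of p] by auto
    then show "p \<in> tree_level T0 le0 (Restr r (underS r \<beta>))" using p unfolding tree_level_def by blast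
  qed
qed

lemma lev0r: "tree_level T0 le0 r = {}"
proof (rule ccontr)
  assume "tree_level T0 le0 r \<noteq> {}"
  then obtain p where p: "p \<in> T0" "Restr le0 (tree_pred T0 le0 p) =o r" unfolding tree_level_def by auto
  have "Restr r (underS r (fst p)) =o r"
    using ordIso_transitive[OF ordIso_symmetric[OF P0'[OF p(1)]] p(2)] .
  moreover have "Field r \<noteq> {}" using inf by auto
  then have "Restr r (underS r (fst p)) <o r" using underS_Restr_ordLess[OF W] by blast
  ultimately show False using not_ordLess_ordIso by blast
qed

lemma F_ne: "F \<noteq> {}"
proof
  assume "F = {}"
  then have "cardSuc r \<le>o |{}::'a set set set|" using Fc by simp
  moreover have "|{}::'a set set set| \<le>o r" using ordLeq_ordIso_trans[OF card_of_empty card_of_Field_ordIso[OF C]] .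
  ultimately have "cardSuc r \<le>o r" by (rule ordLeq_transitive)
  then show False using cardSuc_greater[OF C] not_ordLess_ordLeq by blast
qed

lemma levc0:
  assumes b: "\<beta> \<in> Field r"
  shows "|tree_level T0 le0 (Restr r (underS r \<beta>))| <o r"
proof -
  have "{p\<in>T0. fst p = \<beta>} \<subseteq> Pair \<beta> ` components E (V - Va \<beta>)"
  proof
    fix p assume "p \<in> {p\<in>T0. fst p = \<beta>}"
    then obtain W where "W \<in> F" "p = h W \<beta>" using T0E by fastforce
    then show "p \<in> Pair \<beta> ` components E (V - Va \<beta>)" using Cc_comp[OF _ b] unfolding h_def by blast
  qed
  then have "|{p\<in>T0. fst p = \<beta>}| \<le>o |components E (V - Va \<beta>)|"
    using ordLeq_transitive[OF card_of_mono1 card_of_image] by blast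
  moreover have "|components E (V - Va \<beta>)| <o r" using kl VaV Vac[OF b] unfolding kl_connected_def by blast
  ultimately have "|{p\<in>T0. fst p = \<beta>}| <o r" by (rule ordLeq_ordLess_trans)
  then show ?thesis using lev0[OF b] by simp
qed

lemma br0:
  assumes WF: "W \<in> F"
  shows "is_branch T0 le0 (h W ` Field r)" "Restr le0 (h W ` Field r) =o r"
proof -
  have "Restr le0 (h W ` Field r) = dir_image r (h W)" using restr0[OF WF subset_refl] Restr_Field[of r] by simp
  moreover have "dir_image r (h W) =o r" using ordIso_symmetric[OF dir_image_ordIso[OF W inj_h]] .
  ultimately show "Restr le0 (h W ` Field r) =o r" by simp
  have ch: "is_chain T0 le0 (h W ` Field r)"
    unfolding is_chain_def
  proof (intro conjI ballI)
    show "h W ` Field r \<subseteq> T0" using hT0[OF WF] by blast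
    fix p q assume "p \<in> h W ` Field r" "q \<in> h W ` Field r"
    then obtain a b where ab: "a \<in> Field r" "b \<in> Field r" "p = h W a" "q = h W b" by blast
    have "(a, b) \<in> r \<or> (b, a) \<in> r"
    proof (cases "a = b")
      case True then show ?thesis using r_props(1) ab(1) unfolding refl_on_def by simp
    next
      case False then show ?thesis using r_props(4) ab(1,2) unfolding total_on_def by blast
    qed
    then show "(p, q) \<in> le0 \<or> (q, p) \<in> le0" using le0_h[OF WF] ab by blast
  qed
  have mx: "Cs = h W ` Field r" if Cs: "is_chain T0 le0 Cs" "h W ` Field r \<subseteq> Cs" for Cs
  proof
    show "h W ` Field r \<subseteq> Cs" using Cs(2) .
    show "Cs \<subseteq> h W ` Field r"
    proof
      fix q assume q: "q \<in> Cs"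
      then have qT: "q \<in> T0" using Cs(1) unfolding is_chain_def by blast
      obtain W' \<gamma> where W': "W' \<in> F" "\<gamma> \<in> Field r" "q = h W' \<gamma>" using T0E[OF qT] by blast
      have "h W \<gamma> \<in> Cs" using Cs(2) W'(2) by blast
      then have "(q, h W \<gamma>) \<in> le0 \<or> (h W \<gamma>, q) \<in> le0" using q Cs(1) unfolding is_chain_def by blast
      then have "Cc W \<gamma> \<subseteq> Cc W' \<gamma> \<or> Cc W' \<gamma> \<subseteq> Cc W \<gamma>" using W'(3) unfolding le0_def by auto
      then have "Cc W' \<gamma> \<inter> Cc W \<gamma> \<noteq> {}" using Cc_ne[OF WF W'(2)] Cc_ne[OF W'(1,2)] by blast
      then have "Cc W' \<gamma> = Cc W \<gamma>" using Cc_eq[OF W'(1) WF W'(2)] by blast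
      then have "q = h W \<gamma>" using W'(3) unfolding h_def by simp
      then show "q \<in> h W ` Field r" using W'(2) by blast
    qed
  qed
  show "is_branch T0 le0 (h W ` Field r)" unfolding is_branch_def using ch mx by blast
qed

lemma kt0: "kurepa_tree r T0 le0"
  unfolding kurepa_tree_def tree_height_is_def
proof (intro conjI ballI)
  show "is_tree T0 le0" by (rule tree0)
  show "tree_level T0 le0 r = {}" by (rule lev0r)
  fix a assume a: "a \<in> Field r"
  obtain W where WF: "W \<in> F" using F_ne by blast
  have "h W a \<in> tree_level T0 le0 (Restr r (underS r a))" using lev0[OF a] hT0[OF WF a] by simp
  then show "tree_level T0 le0 (Restr r (underS r a)) \<noteq> {}" by blast
  show "|tree_level T0 le0 (Restr r (underS r a))| <o r" using levc0[OF a] .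
next
  define Bs where "Bs = {B. is_branch T0 le0 B \<and> Restr le0 B =o r}"
  have "inj_on (\<lambda>W. h W ` Field r) F"
  proof (rule inj_onI)
    fix W W' assume WF: "W \<in> F" and WF': "W' \<in> F" and eq: "h W ` Field r = h W' ` Field r"
    show "W = W'"
    proof (rule ccontr)
      assume "W \<noteq> W'"
      then obtain \<alpha> where a: "\<alpha> \<in> Field r" "Cc W \<alpha> \<noteq> Cc W' \<alpha>" using sep_diff[OF WF WF'] by blast
      have "h W \<alpha> \<in> h W' ` Field r" using eq a(1) by blast
      then obtain \<gamma> where "h W \<alpha> = h W' \<gamma>" by blast
      then show False using a(2) unfolding h_def by auto
    qed
  qed
  moreover have "(\<lambda>W. h W ` Field r) ` F \<subseteq> Bs"
  proof
    fix B assume "B \<in> (\<lambda>W. h W ` Field r) ` F"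
    then obtain W where "W \<in> F" "B = h W ` Field r" by blast
    then show "B \<in> Bs" using br0[of W] unfolding Bs_def by simp
  qed
  ultimately have "|F| \<le>o |Bs|" using card_of_ordLeq[of F Bs] by blast
  then show "cardSuc r \<le>o |{B. is_branch T0 le0 B \<and> Restr le0 B =o r}|"
    using ordLeq_transitive[OF Fc] unfolding Bs_def by blast
qed

lemma T0c: "|T0| \<le>o |Field r|"
proof -
  have "T0 \<subseteq> (\<Union>\<alpha>\<in>Field r. Pair \<alpha> ` components E (V - Va \<alpha>))"
  proof
    fix p assume "p \<in> T0"
    then obtain W \<alpha> where "W \<in> F" "\<alpha> \<in> Field r" "p = h W \<alpha>" using T0E by blast
    moreover have "Cc W \<alpha> \<in> components E (V - Va \<alpha>)" using Cc_comp calculation(1,2) by blast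
    ultimately show "p \<in> (\<Union>\<alpha>\<in>Field r. Pair \<alpha> ` components E (V - Va \<alpha>))"
      unfolding h_def by blast
  qed
  moreover have "|\<Union>\<alpha>\<in>Field r. Pair \<alpha> ` components E (V - Va \<alpha>)| \<le>o |Field r|"
  proof (rule card_of_UNION_ordLeq_infinite[OF inf card_of_refl[THEN ordIso_imp_ordLeq]], rule ballI)
    fix \<alpha> assume a: "\<alpha> \<in> Field r"
    have "|components E (V - Va \<alpha>)| <o r" using kl VaV Vac[OF a] unfolding kl_connected_def by blast
    then have "|Pair \<alpha> ` components E (V - Va \<alpha>)| <o r" using ordLeq_ordLess_trans[OF card_of_image] by blast
    then show "|Pair \<alpha> ` components E (V - Va \<alpha>)| \<le>o |Field r|" using less_r_imp_le_Field[OF C] by blast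
  qed
  ultimately show ?thesis using ordLeq_transitive[OF card_of_mono1] by blast
qed

end

lemma backward:
  fixes r :: "'a rel" and V :: "'a set" and E :: "'a set set" and F :: "'a set set set"
  assumes C: "Card_order r" and inf: "infinite (Field r)" and reg: "regularCard r"
    and Vi: "|V| =o r" and kl: "kl_connected r r V E" and kmf: "kurepa_minor_family r V E F"
    and Fc: "cardSuc r \<le>o |F|"
  shows "\<exists>(T :: 'a set) (le :: 'a rel). kurepa_tree r T le"
proof -
  have "|Field r| =o |V|" using ordIso_transitive[OF card_of_Field_ordIso[OF C] ordIso_symmetric[OF Vi]] .
  then obtain g where g: "bij_betw g (Field r) V" using card_of_ordIso by blast
  interpret bw r V E F g using C inf reg kl kmf Fc g by unfold_locales
  have "\<exists>f :: 'a \<times> 'a set \<Rightarrow> 'a. inj_on f T0 \<and> f ` T0 \<subseteq> Field r"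
    using T0c card_of_ordLeq[of T0 "Field r"] by simp
  then obtain f :: "'a \<times> 'a set \<Rightarrow> 'a" where f: "inj_on f T0" by blast
  have "kurepa_tree r (f ` T0) (map_prod f f ` le0)" using kurepa_transport[OF kt0 f(1)] .
  then show ?thesis by blast
qed


theorem mainTheorem12:
  fixes r :: "'a rel"
  assumes "Card_order r" and "infinite (Field r)" and "regularCard r"
  shows "(\<exists>(T :: 'a set) (le :: 'a rel). kurepa_tree r T le) \<longleftrightarrow>
         (\<exists>(V :: 'a set) (E :: 'a set set) (F :: 'a set set set).
             is_graph V E \<and> (card_of V, r) \<in> ordIso \<and> kl_connected r r V E \<and>
             kurepa_minor_family r V E F \<and> (cardSuc r, card_of F) \<in> ordLeq)"
proof
  assume "\<exists>(T :: 'a set) (le :: 'a rel). kurepa_tree r T le"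
  then obtain T :: "'a set" and le :: "'a rel" where K: "kurepa_tree r T le" by blast
  show "\<exists>(V :: 'a set) (E :: 'a set set) (F :: 'a set set set).
             is_graph V E \<and> (card_of V, r) \<in> ordIso \<and> kl_connected r r V E \<and>
             kurepa_minor_family r V E F \<and> (cardSuc r, card_of F) \<in> ordLeq"
    using forward[OF assms(1,2) K] .
next
  assume "\<exists>(V :: 'a set) (E :: 'a set set) (F :: 'a set set set).
             is_graph V E \<and> (card_of V, r) \<in> ordIso \<and> kl_connected r r V E \<and>
             kurepa_minor_family r V E F \<and> (cardSuc r, card_of F) \<in> ordLeq"
  then obtain V :: "'a set" and E :: "'a set set" and F :: "'a set set set" where
    H: "|V| =o r" "kl_connected r r V E" "kurepa_minor_family r V E F" "cardSuc r \<le>o |F|" by blast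
  show "\<exists>(T :: 'a set) (le :: 'a rel). kurepa_tree r T le"
    using backward[OF assms H] .
qed

end
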